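(* For every real $x$ and every natural number $n$, \[0 < \mathrm{LB}_{\exp}(x,n) \le \exp(x) \le \mathrm{UB}_{\exp}(x,n).\]
   Context: For $-1 \le x < 0$ and natural $n$: \[\mathrm{LB}_{\exp}(x,n) = \sum_{i=0}^{2(n+1)+1}\frac{x^i}{i!},\qquad \mathrm{UB}_{\exp}(x,n) = \sum_{i=0}^{2(n+1)}\frac{x^i}{i!}.\] Further: $\mathrm{LB}_{\exp}(0,n)=\mathrm{UB}_{\exp}(0,n)=1$; for $x<-1$, with $k = -\lfloor x\rfloor$: $\mathrm{LB}_{\exp}(x,n) = \left(\mathrm{LB}_{\exp}(x/k,n)\right)^{k}$ and $\mathrm{UB}_{\exp}(x,n) = \left(\mathrm{UB}_{\exp}(x/k,n)\right)^{k}$; for $x>0$: $\mathrm{LB}_{\exp}(x,n) = 1/\mathrm{UB}_{\exp}(-x,n)$ and $\mathrm{UB}_{\exp}(x,n) = 1/\mathrm{LB}_{\exp}(-x,n)$. *)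

theory Defs
  imports Complex_Main
begin

(* Taylor polynomials used on the base interval -1 <= x < 0 *)
definition lb_exp_base :: "real \<Rightarrow> nat \<Rightarrow> real" where
  "lb_exp_base x n = (\<Sum>i=0..2*(n+1)+1. x ^ i / fact i)"

definition ub_exp_base :: "real \<Rightarrow> nat \<Rightarrow> real" where
  "ub_exp_base x n = (\<Sum>i=0..2*(n+1). x ^ i / fact i)"

definition lb_exp_neg :: "real \<Rightarrow> nat \<Rightarrow> real" where
  "lb_exp_neg x n =
     (if x = 0 then 1
      else if -1 \<le> x then lb_exp_base x n
      else (let k = nat (- \<lfloor>x\<rfloor>) in (lb_exp_base (x / real k) n) ^ k))"

definition ub_exp_neg :: "real \<Rightarrow> nat \<Rightarrow> real" where
  "ub_exp_neg x n =
     (if x = 0 then 1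
      else if -1 \<le> x then ub_exp_base x n
      else (let k = nat (- \<lfloor>x\<rfloor>) in (ub_exp_base (x / real k) n) ^ k))"

definition LB_exp :: "real \<Rightarrow> nat \<Rightarrow> real" where
  "LB_exp x n = (if 0 < x then 1 / ub_exp_neg (- x) n else lb_exp_neg x n)"

definition UB_exp :: "real \<Rightarrow> nat \<Rightarrow> real" where
  "UB_exp x n = (if 0 < x then 1 / lb_exp_neg (- x) n else ub_exp_neg x n)"

end

theory Submission
  imports Defs
begin

lemma sum_conv: "(\<Sum>i=0..m. f i) = (\<Sum>i<Suc m. (f i :: real))"
  by (simp add: atLeast0AtMost lessThan_Suc_atMost)

lemma base_lb_le:
  assumes "y \<le> 0" shows "lb_exp_base y n \<le> exp y"
proof -
  obtain t where t: "exp y = (\<Sum>m<2*n+4. (y ^ m) / fact m) + (exp t / fact (2*n+4)) * y ^ (2*n+4)"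
    using Maclaurin_exp_le by blast
  have "y ^ (2*n+4) \<ge> 0" by (simp add: zero_le_even_power)
  hence "(exp t / fact (2*n+4)) * y ^ (2*n+4) \<ge> 0" by simp
  moreover have "lb_exp_base y n = (\<Sum>m<2*n+4. (y ^ m) / fact m)"
    unfolding lb_exp_base_def sum_conv by (simp add: numeral_eq_Suc)
  ultimately show ?thesis using t by linarith
qed

lemma base_ub_ge:
  assumes "y \<le> 0" shows "exp y \<le> ub_exp_base y n"
proof -
  obtain t where t: "exp y = (\<Sum>m<2*n+3. (y ^ m) / fact m) + (exp t / fact (2*n+3)) * y ^ (2*n+3)"
    using Maclaurin_exp_le by blast
  have "y ^ (2*n+3) \<le> 0" using assms
    by (simp add: power_le_zero_eq)
  hence "(exp t / fact (2*n+3)) * y ^ (2*n+3) \<le> 0" by (intro mult_nonneg_nonpos) auto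
  moreover have "ub_exp_base y n = (\<Sum>m<2*n+3. (y ^ m) / fact m)"
    unfolding ub_exp_base_def sum_conv by (simp add: numeral_eq_Suc)
  ultimately show ?thesis using t by linarith
qed

lemma pair_nonneg:
  fixes y :: real
  assumes "-1 \<le> y" "y \<le> 0"
  shows "y^(2*m)/fact (2*m) + y^(2*m+1)/fact (2*m+1) \<ge> 0"
proof -
  have f: "fact (2*m+1) = (real (2*m+1)) * fact (2*m)" by simp
  have "y^(2*m+1)/fact (2*m+1) = (y^(2*m)/fact (2*m)) * (y / real (2*m+1))" (is "_ = ?A * ?B")
    unfolding f by (simp only: power_Suc add.commute[of _ 1] plus_1_eq_Suc) (simp add: field_simps)
  hence e: "y^(2*m)/fact (2*m) + y^(2*m+1)/fact (2*m+1) = (y^(2*m)/fact (2*m)) * (1 + y / real (2*m+1))"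
    by (simp only: distrib_left mult_1_right)
  have "y / real (2*m+1) \<ge> -1" using assms by (simp add: field_simps)
  moreover have "y^(2*m) \<ge> 0" by (simp add: zero_le_even_power)
  ultimately show ?thesis unfolding e by simp
qed

lemma S_mono:
  fixes y :: real
  assumes "-1 \<le> y" "y \<le> 0"
  shows "(\<Sum>i<2*m+4. y^i/fact i) \<ge> (\<Sum>i<4. y^i/fact i)"
proof (induction m)
  case 0 then show ?case by simp
next
  case (Suc m)
  have "(\<Sum>i<2*Suc m+4. y^i/fact i) = (\<Sum>i<2*m+4. y^i/fact i) + (y^(2*(m+2))/fact (2*(m+2)) + y^(2*(m+2)+1)/fact (2*(m+2)+1))"
    by (simp add: numeral_eq_Suc algebra_simps del: fact_Suc power_Suc)
  moreover have "y^(2*(m+2))/fact (2*(m+2)) + y^(2*(m+2)+1)/fact (2*(m+2)+1) \<ge> 0"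
    using pair_nonneg[OF assms] by blast
  ultimately show ?case using Suc by linarith
qed

lemma base_lb_pos:
  fixes y :: real
  assumes "-1 \<le> y" "y \<le> 0"
  shows "0 < lb_exp_base y n"
proof -
  have "lb_exp_base y n = (\<Sum>m<2*n+4. (y ^ m) / fact m)"
    unfolding lb_exp_base_def sum_conv by (simp add: numeral_eq_Suc)
  moreover have "(\<Sum>i<4. y^i/fact i) = 1 + y + y^2/2 + y^3/6"
    by (simp add: numeral_eq_Suc fact_numeral)
  moreover have "1 + y + y^2/2 + y^3/6 > 0"
  proof (cases "y = 0")
    case False
    hence "y^2 > 0" by simp
    have "y^2/2 + y^3/6 = y^2 * (3+y)/6" by (simp add: power2_eq_square power3_eq_cube algebra_simps)
    moreover have "y^2 * (3+y)/6 > 0" using \<open>y^2 > 0\<close> assms by simp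
    ultimately show ?thesis using assms by linarith
  qed simp
  ultimately show ?thesis using S_mono[OF assms, of n] by linarith
qed

lemma neg_bounds:
  fixes x :: real
  assumes "x \<le> 0"
  shows "0 < lb_exp_neg x n \<and> lb_exp_neg x n \<le> exp x \<and> exp x \<le> ub_exp_neg x n"
proof (cases "x = 0")
  case True then show ?thesis by (simp add: lb_exp_neg_def ub_exp_neg_def)
next
  case False
  show ?thesis
  proof (cases "-1 \<le> x")
    case True
    then show ?thesis using False assms base_lb_pos base_lb_le base_ub_ge
      by (simp add: lb_exp_neg_def ub_exp_neg_def)
  next
    case c: False
    define k where "k = nat (- \<lfloor>x\<rfloor>)"
    have fl: "\<lfloor>x\<rfloor> \<le> -2" using c by linarith
    have kr: "real k = - of_int \<lfloor>x\<rfloor>" using fl unfolding k_def by simp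
    have kpos: "real k > 0" using kr fl by simp
    have "real k \<ge> -x" using kr by linarith
    hence y1: "-1 \<le> x / real k" using kpos by (simp add: field_simps)
    have y2: "x / real k \<le> 0" using assms kpos by (simp add: divide_nonpos_pos)
    have ex: "exp (x / real k) ^ k = exp x"
      using kpos by (simp add: exp_of_nat_mult[symmetric])
    have L: "lb_exp_neg x n = lb_exp_base (x / real k) n ^ k"
      using False c by (simp add: lb_exp_neg_def k_def Let_def)
    have U: "ub_exp_neg x n = ub_exp_base (x / real k) n ^ k"
      using False c by (simp add: ub_exp_neg_def k_def Let_def)
    have p: "0 < lb_exp_base (x / real k) n" using base_lb_pos[OF y1 y2] .
    have a: "lb_exp_base (x / real k) n \<le> exp (x / real k)" using base_lb_le[OF y2] .
    have b: "exp (x / real k) \<le> ub_exp_base (x / real k) n" using base_ub_ge[OF y2] .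
    show ?thesis unfolding L U
      using p power_mono[OF a, of k] power_mono[OF b, of k] ex by simp
  qed
qed

theorem proposition6:
  fixes x :: real and n :: nat
  shows "0 < LB_exp x n \<and> LB_exp x n \<le> exp x \<and> exp x \<le> UB_exp x n"
proof (cases "0 < x")
  case True
  have h: "0 < lb_exp_neg (-x) n" "lb_exp_neg (-x) n \<le> exp (-x)" "exp (-x) \<le> ub_exp_neg (-x) n"
    using neg_bounds[of "-x" n] True by auto
  have ub: "0 < ub_exp_neg (-x) n" using h by simp
  have "1 / ub_exp_neg (-x) n \<le> 1 / exp (-x)"
    using h(3) by (simp add: frac_le)
  moreover have "1 / lb_exp_neg (-x) n \<ge> 1 / exp (-x)"
    using h(1,2) by (simp add: frac_le)
  moreover have "1 / exp (-x) = exp x" by (simp add: exp_minus divide_inverse)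
  ultimately show ?thesis using True ub by (simp add: LB_exp_def UB_exp_def)
next
  case False
  then show ?thesis using neg_bounds[of x n] by (simp add: LB_exp_def UB_exp_def)
qed

end
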